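(* Let $k>0$ and consider the system of ODEs, for $r>0$, $\theta$, $z$, $p_R$, $p_S$ real, \[ \dot r = p_R,\quad \dot\theta = \frac{p_S}{r^2},\quad \dot z = \frac{p_S}{2},\quad \dot p_R = \frac{p_S^2}{r^3} - \frac{2kr^3}{(r^4+16z^2)^{3/2}},\quad \dot p_S = -\frac{8kr^2 z}{(r^4+16z^2)^{3/2}}, \] with first integrals $H = \frac12\big(p_R^2+\frac{p_S^2}{r^2}\big) - \frac{k}{\sqrt{r^4+16z^2}}$, \begin{align*} F_1 &= \Big(p_Rp_Sr-2p_R^2z+\frac{2p_S^2z}{r^2}\Big)\cos(2\theta) + \Big(\frac{4p_Rp_Sz}{r}-p_S^2+\frac{kr^2}{\sqrt{r^4+16z^2}}\Big)\sin(2\theta),\\ F_2 &= -\Big(p_Rp_Sr-2p_R^2z+\frac{2p_S^2z}{r^2}\Big)\sin(2\theta) + \Big(\frac{4p_Rp_Sz}{r}-p_S^2+\frac{kr^2}{\sqrt{r^4+16z^2}}\Big)\cos(2\theta),\\ F_3 &= (2zp_R-rp_S)^2 + 4z^2\Big(\frac{p_S^2}{r^2}+\frac{2k}{\sqrt{r^4+16z^2}}\Big). \end{align*} Let $J\ge 0$ and (when $J>0$) $\theta_0\in[0,\pi)$ be defined by $F_1 = J\sin(2\theta_0)$, $F_2 = J\cos(2\theta_0)$ (so $J^2 = F_1^2+F_2^2 = 2HF_3+k^2$). Then every trajectory with fixed values of $H, F_3, \theta_0$ lies on a surface (in coordinates $(r,\theta,z)$) as follows: (i) in the general case $F_3>0$,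 $J>0$, the surface \[ F_3 = 8z^2H + k\sqrt{r^4+16z^2} - \sqrt{k^2+2HF_3}\, r^2\cos\big(2(\theta-\theta_0)\big); \] (ii) in the minimum energy case $F_3>0$, $J=0$, the ellipsoid of revolution $4k^2z^2 + kF_3 r^2 = F_3^2$; (iii) in the degenerate case $F_3=0$, the straight horizontal line through the origin given by $z=0$, $\theta = \theta_0 \bmod \pi$.
   Context: Cylindrical coordinates $x=r\cos\theta$, $y=r\sin\theta$ on $\mathbb{R}^3$ (the Heisenberg group); the system describes nonholonomic motion on the Heisenberg group in the potential $-k/\sqrt{r^4+16z^2}$. $H,F_1,F_2,F_3$ are constant along solutions, and $F_3\ge 0$. *)

theory Defs
  imports "HOL-Analysis.Analysis"
begin

definition rho :: "real \<Rightarrow> real \<Rightarrow> real" where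
  "rho r z = sqrt (r ^ 4 + 16 * z ^ 2)"

definition Ham :: "real \<Rightarrow> real \<Rightarrow> real \<Rightarrow> real \<Rightarrow> real \<Rightarrow> real" where
  "Ham k r z pR pS = (1/2) * (pR ^ 2 + pS ^ 2 / r ^ 2) - k / rho r z"

definition FA :: "real \<Rightarrow> real \<Rightarrow> real \<Rightarrow> real \<Rightarrow> real \<Rightarrow> real" where
  "FA k r z pR pS = pR * pS * r - 2 * pR ^ 2 * z + 2 * pS ^ 2 * z / r ^ 2"

definition FB :: "real \<Rightarrow> real \<Rightarrow> real \<Rightarrow> real \<Rightarrow> real \<Rightarrow> real" where
  "FB k r z pR pS = 4 * pR * pS * z / r - pS ^ 2 + k * r ^ 2 / rho r z"

definition F1 :: "real \<Rightarrow> real \<Rightarrow> real \<Rightarrow> real \<Rightarrow> real \<Rightarrow> real \<Rightarrow> real" where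
  "F1 k r th z pR pS = FA k r z pR pS * cos (2 * th) + FB k r z pR pS * sin (2 * th)"

definition F2 :: "real \<Rightarrow> real \<Rightarrow> real \<Rightarrow> real \<Rightarrow> real \<Rightarrow> real \<Rightarrow> real" where
  "F2 k r th z pR pS = - FA k r z pR pS * sin (2 * th) + FB k r z pR pS * cos (2 * th)"

definition F3 :: "real \<Rightarrow> real \<Rightarrow> real \<Rightarrow> real \<Rightarrow> real \<Rightarrow> real" where
  "F3 k r z pR pS = (2 * z * pR - r * pS) ^ 2 + 4 * z ^ 2 * (pS ^ 2 / r ^ 2 + 2 * k / rho r z)"

definition is_solution ::
  "real \<Rightarrow> real set \<Rightarrow> (real \<Rightarrow> real) \<Rightarrow> (real \<Rightarrow> real) \<Rightarrow> (real \<Rightarrow> real)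
     \<Rightarrow> (real \<Rightarrow> real) \<Rightarrow> (real \<Rightarrow> real) \<Rightarrow> bool" where
  "is_solution k I r th z pR pS \<longleftrightarrow>
     (\<forall>t\<in>I. r t > 0 \<and>
        (r has_real_derivative pR t) (at t) \<and>
        (th has_real_derivative pS t / (r t) ^ 2) (at t) \<and>
        (z has_real_derivative pS t / 2) (at t) \<and>
        (pR has_real_derivative
            (pS t ^ 2 / (r t) ^ 3 - 2 * k * (r t) ^ 3 / (rho (r t) (z t)) ^ 3)) (at t) \<and>
        (pS has_real_derivative
            (- 8 * k * (r t) ^ 2 * z t / (rho (r t) (z t)) ^ 3)) (at t))"

end

theory Submission
  imports Defs
begin

lemma rho_pos: "r > 0 \<Longrightarrow> rho r z > 0"
  unfolding rho_def by (simp add: add_pos_nonneg)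
lemma rho_sq: "rho r z ^ 2 = r ^ 4 + 16 * z ^ 2"
  unfolding rho_def by (simp add: add_nonneg_nonneg)

lemma DERIV_rho:
  assumes "(r has_real_derivative r') (at t)" "(z has_real_derivative z') (at t)" "r t > 0"
  shows "((\<lambda>t. rho (r t) (z t)) has_real_derivative (2*(r t)^3*r' + 16*z t*z')/rho (r t) (z t)) (at t)"
proof -
  have p: "0 < r t ^ 4 + 16 * (z t)^2" using assms(3) by (simp add: add_pos_nonneg)
  have d: "((\<lambda>t. r t ^4 + 16*z t^2) has_real_derivative 4*r t^3*r' + 32*z t*z') (at t)"
    by (auto intro!: derivative_eq_intros assms)
  have "((\<lambda>t. sqrt (r t ^4 + 16*z t^2)) has_real_derivative
     inverse (sqrt (r t ^4 + 16*z t^2)) / 2 * (4*r t^3*r' + 32*z t*z')) (at t)"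
    by (rule DERIV_chain2[OF DERIV_real_sqrt[OF p] d])
  then show ?thesis unfolding rho_def
    by (rule DERIV_cong) (use p in \<open>simp add: field_simps\<close>)
qed

lemma I1:
  fixes r R z pR pS k :: real
  assumes "r > 0" "R > 0" "R^2 = r^4 + 16*z^2"
  shows "(pR * pS * r - 2 * pR ^ 2 * z + 2 * pS ^ 2 * z / r ^ 2)^2 + (4 * pR * pS * z / r - pS ^ 2 + k * r ^ 2 / R)^2
   = 2 * ((1/2) * (pR ^ 2 + pS ^ 2 / r ^ 2) - k / R) * ((2 * z * pR - r * pS) ^ 2 + 4 * z ^ 2 * (pS ^ 2 / r ^ 2 + 2 * k / R)) + k^2"
proof -
  have nz: "r \<noteq> 0" "R \<noteq> 0" using assms by auto
  show ?thesis
  apply (simp add: field_simps nz)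
  using assms(3) by algebra
qed

lemma I2:
  fixes r R z pR pS k :: real
  assumes "r > 0" "R > 0" "R^2 = r^4 + 16*z^2"
  shows "(2 * z * pR - r * pS) ^ 2 + 4 * z ^ 2 * (pS ^ 2 / r ^ 2 + 2 * k / R) = 8*z^2*((1/2) * (pR ^ 2 + pS ^ 2 / r ^ 2) - k / R)
    + k * R - r^2 * (4 * pR * pS * z / r - pS ^ 2 + k * r ^ 2 / R)"
proof -
  have nz: "r \<noteq> 0" "R \<noteq> 0" using assms by auto
  show ?thesis
  apply (simp add: field_simps nz)
  using assms(3) by algebra
qed

locale ode_pt =
  fixes k t :: real and r th z pR pS :: "real \<Rightarrow> real"
  assumes rpos: "r t > 0"
  and dr: "(r has_real_derivative pR t) (at t)"
  and dth: "(th has_real_derivative pS t / (r t) ^ 2) (at t)"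
  and dz: "(z has_real_derivative pS t / 2) (at t)"
  and dpR: "(pR has_real_derivative
            (pS t ^ 2 / (r t) ^ 3 - 2 * k * (r t) ^ 3 / (rho (r t) (z t)) ^ 3)) (at t)"
  and dpS: "(pS has_real_derivative
            (- 8 * k * (r t) ^ 2 * z t / (rho (r t) (z t)) ^ 3)) (at t)"
begin
lemma drho: "((\<lambda>t. rho (r t) (z t)) has_real_derivative (2*(r t)^3*pR t + 16*z t*(pS t / 2))/rho (r t) (z t)) (at t)"
  by (rule DERIV_rho[OF dr dz rpos])

lemma rn: "rho (r t) (z t) \<noteq> 0" using rho_pos[OF rpos, of "z t"] by simp
lemma rtn: "r t \<noteq> 0" using rpos by simp

lemma Ham_d: "((\<lambda>t. Ham k (r t) (z t) (pR t) (pS t)) has_real_derivative 0) (at t)"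
  unfolding Ham_def
  apply (rule derivative_eq_intros drho dr dz dth dpR dpS refl rn | (use rpos rho_pos in force))+
  apply (simp add: field_simps rtn rn)
  by algebra

lemma rho3: "rho (r t) (z t) ^ 3 = rho (r t) (z t) * (r t^4 + 16*(z t)^2)"
  using rho_sq[of "r t" "z t"] by algebra

lemma F3_d: "((\<lambda>t. F3 k (r t) (z t) (pR t) (pS t)) has_real_derivative 0) (at t)"
proof -
  obtain R where R: "rho (r t) (z t) = R" by simp
  have R2: "R^2 = r t^4 + 16*(z t)^2" and Rn: "R \<noteq> 0" using rho_sq[of "r t" "z t"] rn R by auto
  show ?thesis
  unfolding F3_def
  apply (rule derivative_eq_intros drho dr dz dth dpR dpS refl rn | (use rpos rho_pos in force))+
  apply (simp only: R)
  apply (simp add: field_simps rtn Rn)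
  using R2 by algebra
qed

lemma FA_d: "((\<lambda>t. FA k (r t) (z t) (pR t) (pS t)) has_real_derivative -2*(pS t/(r t)^2)*FB k (r t) (z t) (pR t) (pS t)) (at t)"
proof -
  obtain R where R: "rho (r t) (z t) = R" by simp
  have R2: "R^2 = r t^4 + 16*(z t)^2" and Rn: "R \<noteq> 0" using rho_sq[of "r t" "z t"] rn R by auto
  show ?thesis
  unfolding FA_def FB_def
  apply (rule derivative_eq_intros drho dr dz dth dpR dpS refl rn | (use rpos rho_pos in force))+
  apply (simp only: R)
  apply (simp add: field_simps rtn Rn)
  using R2 by algebra
qed

lemma FB_d: "((\<lambda>t. FB k (r t) (z t) (pR t) (pS t)) has_real_derivative 2*(pS t/(r t)^2)*FA k (r t) (z t) (pR t) (pS t)) (at t)"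
proof -
  obtain R where R: "rho (r t) (z t) = R" by simp
  have R2: "R^2 = r t^4 + 16*(z t)^2" and Rn: "R \<noteq> 0" using rho_sq[of "r t" "z t"] rn R by auto
  show ?thesis
  unfolding FA_def FB_def
  apply (rule derivative_eq_intros drho dr dz dth dpR dpS refl rn | (use rpos rho_pos in force))+
  apply (simp only: R)
  apply (simp add: field_simps rtn Rn)
  using R2 by algebra
qed


lemma F1_d: "((\<lambda>t. F1 k (r t) (th t) (z t) (pR t) (pS t)) has_real_derivative 0) (at t)"
  unfolding F1_def
  apply (rule derivative_eq_intros FA_d FB_d dth refl)+
  by (simp add: algebra_simps)

lemma F2_d: "((\<lambda>t. F2 k (r t) (th t) (z t) (pR t) (pS t)) has_real_derivative 0) (at t)"
  unfolding F2_def
  apply (rule derivative_eq_intros FA_d FB_d dth refl)+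
  by (simp add: algebra_simps)

end

lemma I3:
  fixes r R z pR pS k :: real
  assumes "r > 0" "R > 0" "R^2 = r^4 + 16*z^2"
  shows "(2 * z * pR - r * pS) ^ 2 + 4 * z ^ 2 * (pS ^ 2 / r ^ 2 + 2 * k / R) = 4*z^2*(pR^2 + pS^2/r^2)
    + k * (r^4 + 8*z^2)/R - r^2 * (4 * pR * pS * z / r - pS ^ 2 + k * r ^ 2 / R)"
proof -
  have nz: "r \<noteq> 0" "R \<noteq> 0" using assms by auto
  show ?thesis
  apply (simp add: field_simps nz)
  by algebra
qed

lemma case2_alg:
  fixes r R z k f3 :: real
  assumes "r > 0" "R > 0" "R^2 = r^4 + 16*z^2" "k > 0"
    "f3 \<ge> k*(r^4+8*z^2)/R" "f3^2 = -4*k^2*z^2 + k*R*f3"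
  shows "4 * k ^ 2 * z ^ 2 + k * f3 * r ^ 2 = f3 ^ 2"
proof -
  have "k*(r^4+8*z^2)/R - k*(R-r^2)/2 = k*(r^4 + r^2*R)/(2*R)"
    using assms(2,3) by (simp add: field_simps power2_eq_square power4_eq_xxxx, algebra)
  also have "\<dots> > 0" using assms by (intro divide_pos_pos mult_pos_pos add_pos_pos) auto
  finally have g: "f3 - k*(R-r^2)/2 > 0" using assms(5) by linarith
  have "(f3 - k*(R-r^2)/2) * (f3 - k*(R+r^2)/2) = 0"
    using assms(3,6) by algebra
  with g have "f3 = k*(R+r^2)/2" by simp
  then have "k*R = 2*f3 - k*r^2" by (simp add: algebra_simps)
  then have "k^2*R^2 = (2*f3 - k*r^2)^2" by (metis power_mult_distrib)
  then show ?thesis using assms(3,4)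
    by (simp add: power2_eq_square algebra_simps) algebra
qed

lemma const_on:
  fixes f :: "real \<Rightarrow> real"
  assumes "convex I" "t0 \<in> I" "\<And>t. t \<in> I \<Longrightarrow> (f has_real_derivative 0) (at t)"
  shows "\<forall>t\<in>I. f t = f t0"
proof -
  obtain c where "\<forall>x\<in>I. f x = c"
    using has_field_derivative_zero_constant[OF assms(1)] assms(3) has_field_derivative_at_within by blast
  then show ?thesis using assms(2) by auto
qed

theorem theorem3:
  fixes k :: real and I :: "real set" and t0 :: real
    and r th z pR pS :: "real \<Rightarrow> real"
  assumes k: "k > 0"
    and I: "open I" "is_interval I" "t0 \<in> I"
    and sol: "is_solution k I r th z pR pS"
  defines "h \<equiv> Ham k (r t0) (z t0) (pR t0) (pS t0)"
    and "f1 \<equiv> F1 k (r t0) (th t0) (z t0) (pR t0) (pS t0)"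
    and "f2 \<equiv> F2 k (r t0) (th t0) (z t0) (pR t0) (pS t0)"
    and "f3 \<equiv> F3 k (r t0) (z t0) (pR t0) (pS t0)"
    and "J \<equiv> sqrt ((F1 k (r t0) (th t0) (z t0) (pR t0) (pS t0)) ^ 2
                  + (F2 k (r t0) (th t0) (z t0) (pR t0) (pS t0)) ^ 2)"
  shows
    "(f3 > 0 \<and> J > 0 \<longrightarrow>
       (\<forall>\<theta>0. 0 \<le> \<theta>0 \<and> \<theta>0 < pi \<and> f1 = J * sin (2 * \<theta>0) \<and> f2 = J * cos (2 * \<theta>0) \<longrightarrow>
         (\<forall>t\<in>I. f3 = 8 * (z t) ^ 2 * h + k * sqrt ((r t) ^ 4 + 16 * (z t) ^ 2)
                      - sqrt (k ^ 2 + 2 * h * f3) * (r t) ^ 2 * cos (2 * (th t - \<theta>0)))))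
   \<and> (f3 > 0 \<and> J = 0 \<longrightarrow>
       (\<forall>t\<in>I. 4 * k ^ 2 * (z t) ^ 2 + k * f3 * (r t) ^ 2 = f3 ^ 2))
   \<and> (f3 = 0 \<longrightarrow>
       (\<forall>\<theta>0. 0 \<le> \<theta>0 \<and> \<theta>0 < pi \<and> f1 = J * sin (2 * \<theta>0) \<and> f2 = J * cos (2 * \<theta>0) \<longrightarrow>
         (\<forall>t\<in>I. z t = 0 \<and> (\<exists>n::int. th t = \<theta>0 + of_int n * pi))))"
proof -
  have cvx: "convex I" using I(2) is_interval_convex_1 by blast
  have ode: "ode_pt k t r th z pR pS" if "t \<in> I" for t
    using sol that unfolding is_solution_def ode_pt_def by auto
  have Hc: "\<forall>t\<in>I. Ham k (r t) (z t) (pR t) (pS t) = h"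
    unfolding h_def by (rule const_on[OF cvx I(3)]) (rule ode_pt.Ham_d[OF ode])
  have F1c: "\<forall>t\<in>I. F1 k (r t) (th t) (z t) (pR t) (pS t) = f1"
    unfolding f1_def by (rule const_on[OF cvx I(3)]) (rule ode_pt.F1_d[OF ode])
  have F2c: "\<forall>t\<in>I. F2 k (r t) (th t) (z t) (pR t) (pS t) = f2"
    unfolding f2_def by (rule const_on[OF cvx I(3)]) (rule ode_pt.F2_d[OF ode])
  have F3c: "\<forall>t\<in>I. F3 k (r t) (z t) (pR t) (pS t) = f3"
    unfolding f3_def by (rule const_on[OF cvx I(3)]) (rule ode_pt.F3_d[OF ode])
  have rpos: "r t > 0" if "t \<in> I" for t using ode[OF that] ode_pt.rpos by blast
  have FABt: "FB k (r t) (z t) (pR t) (pS t) = f1 * sin (2 * th t) + f2 * cos (2 * th t)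
     \<and> FA k (r t) (z t) (pR t) (pS t) = f1 * cos (2 * th t) - f2 * sin (2 * th t)"
    if "t \<in> I" for t
  proof -
    define A where "A = FA k (r t) (z t) (pR t) (pS t)"
    define B where "B = FB k (r t) (z t) (pR t) (pS t)"
    define c where "c = cos (2 * th t)"
    define s where "s = sin (2 * th t)"
    have e1: "A * c + B * s = f1" using F1c that unfolding F1_def A_def B_def c_def s_def by auto
    have e2: "- A * s + B * c = f2" using F2c that unfolding F2_def A_def B_def c_def s_def by auto
    have cs: "s^2 + c^2 = 1" unfolding s_def c_def by simp
    have "f1 * s + f2 * c = B * (s^2 + c^2)" "f1 * c - f2 * s = A * (s^2 + c^2)"
      unfolding e1[symmetric] e2[symmetric] by (simp_all add: algebra_simps power2_eq_square)
    then show ?thesis unfolding cs A_def[symmetric] B_def[symmetric] c_def[symmetric] s_def[symmetric] by simp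
  qed
  have FBt: "FB k (r t) (z t) (pR t) (pS t) = f1 * sin (2 * th t) + f2 * cos (2 * th t)"
    if "t \<in> I" for t using FABt[OF that] by blast
  have Jf: "J = sqrt (f1^2 + f2^2)" unfolding J_def f1_def f2_def ..
  have J0: "J \<ge> 0" unfolding Jf by simp
  have JJ: "f1^2 + f2^2 = 2 * h * f3 + k^2"
  proof -
    have "f1^2 + f2^2 = (FA k (r t0) (z t0) (pR t0) (pS t0))^2 + (FB k (r t0) (z t0) (pR t0) (pS t0))^2"
    proof -
      have "f1^2 + f2^2 = ((FA k (r t0) (z t0) (pR t0) (pS t0))^2 + (FB k (r t0) (z t0) (pR t0) (pS t0))^2)
         * ((sin (2 * th t0))^2 + (cos (2 * th t0))^2)"
        unfolding f1_def f2_def F1_def F2_def by algebra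
      then show ?thesis by simp
    qed
    also have "\<dots> = 2 * h * f3 + k^2"
      unfolding h_def f3_def FA_def FB_def Ham_def F3_def
      by (rule I1[OF rpos[OF I(3)] rho_pos[OF rpos[OF I(3)]] rho_sq])
    finally show ?thesis .
  qed
  have surf: "f3 = 8 * (z t)^2 * h + k * rho (r t) (z t) - (r t)^2 * FB k (r t) (z t) (pR t) (pS t)"
    if "t \<in> I" for t
    using I2[OF rpos[OF that] rho_pos[OF rpos[OF that]] rho_sq, of "z t" "pR t" "pS t" k]
      Hc F3c that unfolding Ham_def F3_def FB_def by auto
  have part1: "\<forall>\<theta>0. 0 \<le> \<theta>0 \<and> \<theta>0 < pi \<and> f1 = J * sin (2 * \<theta>0) \<and> f2 = J * cos (2 * \<theta>0) \<longrightarrow>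
         (\<forall>t\<in>I. f3 = 8 * (z t) ^ 2 * h + k * sqrt ((r t) ^ 4 + 16 * (z t) ^ 2)
                      - sqrt (k ^ 2 + 2 * h * f3) * (r t) ^ 2 * cos (2 * (th t - \<theta>0)))"
  proof (intro allI impI ballI)
    fix \<theta>0 t assume a: "0 \<le> \<theta>0 \<and> \<theta>0 < pi \<and> f1 = J * sin (2 * \<theta>0) \<and> f2 = J * cos (2 * \<theta>0)"
      and t: "t \<in> I"
    have sJ: "sqrt (k ^ 2 + 2 * h * f3) = J" unfolding Jf using JJ by (simp add: algebra_simps)
    have jc: "J * cos (2 * (th t - \<theta>0)) = FB k (r t) (z t) (pR t) (pS t)"
      unfolding FBt[OF t] using a by (simp add: right_diff_distrib cos_diff algebra_simps)
    have X: "sqrt (k ^ 2 + 2 * h * f3) * (r t) ^ 2 * cos (2 * (th t - \<theta>0)) = (r t)^2 * FB k (r t) (z t) (pR t) (pS t)"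
      unfolding sJ jc[symmetric] by (simp add: algebra_simps)
    show "f3 = 8 * (z t) ^ 2 * h + k * sqrt ((r t) ^ 4 + 16 * (z t) ^ 2)
                      - sqrt (k ^ 2 + 2 * h * f3) * (r t) ^ 2 * cos (2 * (th t - \<theta>0))"
      using surf[OF t] X unfolding rho_def by linarith
  qed
  have part2: "f3 > 0 \<and> J = 0 \<longrightarrow> (\<forall>t\<in>I. 4 * k ^ 2 * (z t) ^ 2 + k * f3 * (r t) ^ 2 = f3 ^ 2)"
  proof (intro impI ballI)
    fix t assume a: "f3 > 0 \<and> J = 0" and t: "t \<in> I"
    have "f1^2 + f2^2 = 0" using a unfolding Jf by simp
    then have f12: "f1 = 0" "f2 = 0" by (auto simp: sum_power2_eq_zero_iff)
    then have hf: "2 * h * f3 = -(k^2)" using JJ by simp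
    have FB0: "FB k (r t) (z t) (pR t) (pS t) = 0" using FBt[OF t] f12 by simp
    have ge: "f3 \<ge> k * ((r t)^4 + 8*(z t)^2) / rho (r t) (z t)"
    proof -
      have "f3 = 4*(z t)^2*((pR t)^2 + (pS t)^2/(r t)^2) + k * ((r t)^4 + 8*(z t)^2)/rho (r t) (z t)"
        using I3[OF rpos[OF t] rho_pos[OF rpos[OF t]] rho_sq, of "z t" "pR t" "pS t" k]
          F3c t FB0 unfolding F3_def FB_def by auto
      moreover have "4*(z t)^2*((pR t)^2 + (pS t)^2/(r t)^2) \<ge> 0" by simp
      ultimately show ?thesis by linarith
    qed
    have sq: "f3^2 = -4*k^2*(z t)^2 + k*rho (r t) (z t)*f3"
    proof -
      have "f3 * f3 = (8 * (z t)^2 * h + k * rho (r t) (z t)) * f3" using surf[OF t] FB0 by simp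
      also have "\<dots> = 4 * (z t)^2 * (2 * h * f3) + k * rho (r t) (z t) * f3" by (simp add: algebra_simps)
      finally show ?thesis unfolding hf by (simp add: power2_eq_square)
    qed
    show "4 * k ^ 2 * (z t) ^ 2 + k * f3 * (r t) ^ 2 = f3 ^ 2"
      by (rule case2_alg[OF rpos[OF t] rho_pos[OF rpos[OF t]] rho_sq k ge sq])
  qed
  have part3: "f3 = 0 \<longrightarrow>
       (\<forall>\<theta>0. 0 \<le> \<theta>0 \<and> \<theta>0 < pi \<and> f1 = J * sin (2 * \<theta>0) \<and> f2 = J * cos (2 * \<theta>0) \<longrightarrow>
         (\<forall>t\<in>I. z t = 0 \<and> (\<exists>n::int. th t = \<theta>0 + of_int n * pi)))"
  proof (intro impI allI ballI)
    fix \<theta>0 t assume f30: "f3 = 0"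
      and a: "0 \<le> \<theta>0 \<and> \<theta>0 < pi \<and> f1 = J * sin (2 * \<theta>0) \<and> f2 = J * cos (2 * \<theta>0)"
      and t: "t \<in> I"
    have zp: "z s = 0 \<and> pS s = 0" if s: "s \<in> I" for s
    proof -
      have R: "rho (r s) (z s) > 0" using rho_pos[OF rpos[OF s]] by blast
      have e: "(2 * z s * pR s - r s * pS s) ^ 2 + 4 * (z s) ^ 2 * ((pS s) ^ 2 / (r s) ^ 2) + 8 * k * (z s)^2 / rho (r s) (z s) = 0"
        using F3c s f30 unfolding F3_def by (simp add: algebra_simps add_divide_distrib)
      have n1: "(2 * z s * pR s - r s * pS s) ^ 2 \<ge> 0" by simp
      have n2: "4 * (z s) ^ 2 * ((pS s) ^ 2 / (r s) ^ 2) \<ge> 0" by simp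
      have n3: "8 * k * (z s)^2 / rho (r s) (z s) \<ge> 0" using k R by simp
      have "8 * k * (z s)^2 / rho (r s) (z s) = 0" using e n1 n2 n3 by linarith
      then have z0: "z s = 0" using k R by simp
      have "(2 * z s * pR s - r s * pS s) ^ 2 = 0" using e n1 n2 n3 by linarith
      then have "pS s = 0" using z0 rpos[OF s] by simp
      with z0 show ?thesis by simp
    qed
    have thc: "\<forall>s\<in>I. th s = th t0"
    proof (rule const_on[OF cvx I(3)])
      fix s assume s: "s \<in> I"
      have "(th has_real_derivative pS s / (r s) ^ 2) (at s)" using ode_pt.dth[OF ode[OF s]] .
      then show "(th has_real_derivative 0) (at s)" using zp[OF s] by simp
    qed
    have r0: "r t0 > 0" using rpos[OF I(3)] .
    have rho0: "rho (r t0) (z t0) = (r t0)^2" using zp[OF I(3)] r0 unfolding rho_def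
      by (simp add: power4_eq_xxxx power2_eq_square real_sqrt_mult)
    have FA0: "FA k (r t0) (z t0) (pR t0) (pS t0) = 0" using zp[OF I(3)] unfolding FA_def by simp
    have FB0: "FB k (r t0) (z t0) (pR t0) (pS t0) = k" using zp[OF I(3)] r0 unfolding FB_def rho0 by simp
    have f1e: "f1 = k * sin (2 * th t0)" unfolding f1_def F1_def FA0 FB0 by simp
    have f2e: "f2 = k * cos (2 * th t0)" unfolding f2_def F2_def FA0 FB0 by simp
    have "(k * sin (2 * th t0))^2 + (k * cos (2 * th t0))^2 = k^2"
      by (metis sin_cos_squared_add mult_1_right power_mult_distrib distrib_left)
    then have Jk: "J = k" using k unfolding Jf f1e f2e by simp
    have s1: "sin (2 * th t0) = sin (2 * \<theta>0)" and c1: "cos (2 * th t0) = cos (2 * \<theta>0)"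
      using a f1e f2e k unfolding Jk by auto
    have "cos (2 * th t0 - 2 * \<theta>0) = 1" unfolding cos_diff s1 c1
      by (simp add: power2_eq_square[symmetric])
    then obtain n :: int where "2 * th t0 - 2 * \<theta>0 = n * 2 * pi" by (auto simp: cos_one_2pi_int)
    then have "th t0 = \<theta>0 + of_int n * pi" by (simp add: algebra_simps)
    then show "z t = 0 \<and> (\<exists>n::int. th t = \<theta>0 + of_int n * pi)"
      using zp[OF t] thc t by auto
  qed
  show ?thesis using part1 part2 part3 by blast
qed

end
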